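(* Let $H\in\mathbb{R}^{n\times d}$ have rank $h$, $\Sigma\in\mathbb{R}^{n\times n}$ symmetric positive definite, $y\in\mathbb{R}^n$, $J\ge2$, and let $\Gamma_i$ be the empirical covariances of deterministic EKI iterates $$v_{i+1}^{(j)}=v_i^{(j)}+\Gamma_iH^\top(H\Gamma_iH^\top+\Sigma)^{-1}(y-Hv_i^{(j)}).$$ Consider the generalized eigenvalue problem $H\Gamma_iH^\top w=\delta\,\Sigma w$, whose eigenvectors do not depend on $i$ and whose eigenvalue along an eigenvector evolves as $\delta_{\ell,i}$. Then an eigenvalue that is zero at $i=0$ is zero for all $i\ge1$, and an eigenvalue that is positive at $i=0$ is positive for all $i\ge1$. Let $r$ be the number of positive eigenvalues. There is a $\Sigma$-orthogonal basis $\{w_1,\dots,w_n\}$ of $\mathbb{R}^n$ consisting of eigenvectors of this problem such that: (1) $w_1,\dots,w_r\in\mathsf{Ran}(\Sigma^{-1}H)$ have positive eigenvalues $\delta_{1,i},\dots,\delta_{r,i}$, labeled so that $\delta_{1,1}\ge\delta_{2,1}\ge\dots\ge\delta_{r,1}>0$, and this ordering is preserved for all $i\ge1$; (2) if $r<h$, $w_{r+1},\dots,w_h\in\mathsf{Ran}(\Sigma^{-1}H)$ have eigenvalue zero; (3) if $h<n$, $w_{h+1},\dots,w_n\in\mathsf{Ker}(H^\top)$ have eigenvalue zero. Moreover $\mathsf{span}(w_1,\dots,w_h)=\mathsf{Ran}(\Sigma^{-1}H)$ and $\mathsf{span}(w_{h+1},\dots,w_n)=\mathsf{Ker}(H^\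top)$.
   Context: Empirical covariance $\Gamma_i=\frac1{J-1}\sum_j(v_i^{(j)}-\bar v_i)(v_i^{(j)}-\bar v_i)^\top$, $\bar v_i=\frac1J\sum_jv_i^{(j)}$. $\Sigma$-orthogonal means $w_k^\top\Sigma w_l=0$ for $k\ne l$. *)

theory Defs
  imports "HOL-Analysis.Analysis"
begin

definition spd :: "real^'n^'n \<Rightarrow> bool" where
  "spd S \<longleftrightarrow> transpose S = S \<and> (\<forall>x. x \<noteq> 0 \<longrightarrow> x \<bullet> (S *v x) > 0)"

definition outer :: "real^'a \<Rightarrow> real^'b \<Rightarrow> real^'b^'a" where
  "outer x z = (\<chi> a b. x $ a * z $ b)"

definition ens_mean :: "('j::finite \<Rightarrow> real^'d) \<Rightarrow> real^'d" where
  "ens_mean v = (1 / real CARD('j)) *\<^sub>R (\<Sum>j\<in>UNIV. v j)"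

definition emp_cov :: "('j::finite \<Rightarrow> real^'d) \<Rightarrow> real^'d^'d" where
  "emp_cov v = (1 / (real CARD('j) - 1)) *\<^sub>R
     (\<Sum>j\<in>UNIV. outer (v j - ens_mean v) (v j - ens_mean v))"

primrec eki :: "real^'d^'n \<Rightarrow> real^'n^'n \<Rightarrow> real^'n \<Rightarrow> ('j::finite \<Rightarrow> real^'d)
                 \<Rightarrow> nat \<Rightarrow> 'j \<Rightarrow> real^'d" where
  "eki H S y v0 0 = v0"
| "eki H S y v0 (Suc i) =
     (\<lambda>j. eki H S y v0 i j +
          (emp_cov (eki H S y v0 i) ** transpose H **
           matrix_inv (H ** emp_cov (eki H S y v0 i) ** transpose H + S))
          *v (y - H *v eki H S y v0 i j))"

definition eki_cov :: "real^'d^'n \<Rightarrow> real^'n^'n \<Rightarrow> real^'n \<Rightarrow> ('j::finite \<Rightarrow> real^'d)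
                 \<Rightarrow> nat \<Rightarrow> real^'d^'d" where
  "eki_cov H S y v0 i = emp_cov (eki H S y v0 i)"

end

theory Submission imports Defs begin

lemma mi: "invertible (A::real^'n^'n) \<Longrightarrow> A ** matrix_inv A = mat 1 \<and> matrix_inv A ** A = mat 1"
  unfolding matrix_inv_def invertible_def by (rule someI_ex)

lemma mi_v1: "invertible (A::real^'n^'n) \<Longrightarrow> A *v (matrix_inv A *v x) = x"
  using mi by (metis matrix_vector_mul_assoc matrix_vector_mul_lid)
lemma mi_v2: "invertible (A::real^'n^'n) \<Longrightarrow> matrix_inv A *v (A *v x) = x"
  using mi by (metis matrix_vector_mul_assoc matrix_vector_mul_lid)

lemma sym_inner: "transpose (S::real^'n^'n) = S \<Longrightarrow> x \<bullet> (S *v y) = (S *v x) \<bullet> y"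
  by (metis dot_lmul_matrix transpose_matrix_vector)

lemma tr_inner: "x \<bullet> (transpose (A::real^'n^'m) *v y) = (A *v x) \<bullet> y"
  by (metis dot_lmul_matrix transpose_matrix_vector inner_commute)

lemma spd_pos: "spd S \<Longrightarrow> x \<noteq> 0 \<Longrightarrow> x \<bullet> (S *v x) > 0" unfolding spd_def by auto
lemma spd_nn: "spd S \<Longrightarrow> x \<bullet> (S *v x) \<ge> 0" unfolding spd_def
  by (cases "x = 0") (auto intro: less_imp_le)
lemma spd_zero: "spd S \<Longrightarrow> x \<bullet> (S *v x) = 0 \<Longrightarrow> x = 0"
  using spd_pos by fastforce
lemma spd_sym: "spd S \<Longrightarrow> transpose S = S" unfolding spd_def by auto

lemma pd_invertible:
  fixes S :: "real^'n^'n"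
  assumes "\<And>x. x \<noteq> 0 \<Longrightarrow> x \<bullet> (S *v x) > 0"
  shows "invertible S"
proof -
  have "inj ((*v) S)"
  proof (rule injI)
    fix x y assume "S *v x = S *v y"
    then have "S *v (x - y) = 0" by (simp add: matrix_vector_mult_diff_distrib)
    then show "x = y" using assms[of "x-y"] by fastforce
  qed
  then show ?thesis using invertible_left_inverse matrix_left_invertible_injective by blast
qed

lemma cov_apply:
  fixes v :: "'j::finite \<Rightarrow> real^'d"
  shows "emp_cov v *v z = (1/(real CARD('j) - 1)) *\<^sub>R (\<Sum>j\<in>UNIV. ((v j - ens_mean v) \<bullet> z) *\<^sub>R (v j - ens_mean v))"
  unfolding vec_eq_iff
proof
  fix i
  show "(emp_cov v *v z) $ i = ((1/(real CARD('j) - 1)) *\<^sub>R (\<Sum>j\<in>UNIV. ((v j - ens_mean v) \<bullet> z) *\<^sub>R (v j - ens_mean v))) $ i"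
    apply (simp add: matrix_vector_mult_def emp_cov_def outer_def inner_vec_def sum_distrib_left sum_distrib_right sum_component)
    apply (subst sum.swap)
    apply (simp add: mult_ac)
    done
qed

lemma mv_scale: "(A::real^'a^'b) *v (c *\<^sub>R x) = c *\<^sub>R (A *v x)"
  by (simp add: vec_eq_iff matrix_vector_mult_def sum_distrib_left mult_ac)

lemma C_apply:
  fixes v :: "'j::finite \<Rightarrow> real^'d" and H :: "real^'d^'n"
  shows "(H ** emp_cov v ** transpose H) *v w = (1/(real CARD('j) - 1)) *\<^sub>R (\<Sum>j\<in>UNIV. ((H *v (v j - ens_mean v)) \<bullet> w) *\<^sub>R (H *v (v j - ens_mean v)))"
proof -
  have lin: "linear ((*v) H)" by simp
  have "(H ** emp_cov v ** transpose H) *v w = H *v (emp_cov v *v (transpose H *v w))"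
    by (simp only: matrix_vector_mul_assoc matrix_mul_assoc)
  also have "\<dots> = H *v ((1/(real CARD('j) - 1)) *\<^sub>R (\<Sum>j\<in>UNIV. ((H *v (v j - ens_mean v)) \<bullet> w) *\<^sub>R (v j - ens_mean v)))"
    by (simp only: cov_apply tr_inner)
  also have "\<dots> = (1/(real CARD('j) - 1)) *\<^sub>R (\<Sum>j\<in>UNIV. ((H *v (v j - ens_mean v)) \<bullet> w) *\<^sub>R (H *v (v j - ens_mean v)))"
    by (simp only: linear_scale[OF lin] linear_sum[OF lin])
  finally show ?thesis .
qed

lemma C_psd:
  fixes v :: "'j::finite \<Rightarrow> real^'d" and H :: "real^'d^'n"
  assumes "CARD('j) \<ge> 2"
  shows "w \<bullet> ((H ** emp_cov v ** transpose H) *v w) \<ge> 0"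
proof -
  have c: "1/(real CARD('j) - 1) \<ge> 0" using assms by simp
  have "w \<bullet> ((H ** emp_cov v ** transpose H) *v w) = (1/(real CARD('j) - 1)) * (\<Sum>j\<in>UNIV. ((H *v (v j - ens_mean v)) \<bullet> w)^2)"
    unfolding C_apply by (simp add: inner_sum_right inner_commute[of w] power2_eq_square)
  then show ?thesis using c by (simp add: sum_nonneg)
qed

lemma C_sym:
  fixes v :: "'j::finite \<Rightarrow> real^'d" and H :: "real^'d^'n"
  shows "x \<bullet> ((H ** emp_cov v ** transpose H) *v z) = ((H ** emp_cov v ** transpose H) *v x) \<bullet> z"
  unfolding C_apply by (simp add: inner_sum_right inner_sum_left inner_commute mult_ac)

lemma step:
  fixes H :: "real^'d^'n" and S :: "real^'n^'n" and v :: "'j::finite \<Rightarrow> real^'d" and y :: "real^'n"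
  assumes S: "spd S" and J: "CARD('j) \<ge> 2"
  defines "C \<equiv> H ** emp_cov v ** transpose H"
  defines "K \<equiv> emp_cov v ** transpose H ** matrix_inv (C + S)"
  defines "v' \<equiv> \<lambda>j. v j + K *v (y - H *v v j)"
  assumes eig: "C *v w = \<delta> *\<^sub>R (S *v w)" and w0: "w \<noteq> 0"
  shows "(H ** emp_cov v' ** transpose H) *v w = (\<delta>/(1+\<delta>)^2) *\<^sub>R (S *v w)"
proof -
  define c where "c = 1/(real CARD('j) - 1)"
  define e where "e = (\<lambda>j. v j - ens_mean v)"
  define u where "u = (\<lambda>j. H *v e j)"
  have Capp: "C *v z = c *\<^sub>R (\<Sum>j\<in>UNIV. (u j \<bullet> z) *\<^sub>R u j)" for z
    unfolding C_def C_apply c_def u_def e_def ..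
  have Csym: "x \<bullet> (C *v z) = (C *v x) \<bullet> z" for x z unfolding C_def by (rule C_sym)
  have Ssym: "x \<bullet> (S *v z) = (S *v x) \<bullet> z" for x z using sym_inner spd_sym[OF S] by blast
  have "w \<bullet> (C *v w) \<ge> 0" unfolding C_def using C_psd J by blast
  moreover have "w \<bullet> (S *v w) > 0" using spd_pos[OF S w0] .
  moreover have "w \<bullet> (C *v w) = \<delta> * (w \<bullet> (S *v w))" using eig by simp
  ultimately have d0: "\<delta> \<ge> 0" by (simp add: zero_le_mult_iff)
  define M where "M = C + S"
  define Mi where "Mi = matrix_inv M"
  have Mapp: "M *v z = C *v z + S *v z" for z unfolding M_def by (simp add: matrix_vector_mult_add_rdistrib)
  have Msym: "x \<bullet> (M *v z) = (M *v x) \<bullet> z" for x z unfolding Mapp using Csym Ssym by (simp add: inner_add)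
  have Mpd: "x \<bullet> (M *v x) > 0" if "x \<noteq> 0" for x
  proof -
    have "x \<bullet> (C *v x) \<ge> 0" unfolding C_def using C_psd J by blast
    then show ?thesis unfolding Mapp using spd_pos[OF S that] by (simp add: inner_add)
  qed
  have Minv: "invertible M" by (rule pd_invertible) (use Mpd in blast)
  have Mw: "M *v w = (1+\<delta>) *\<^sub>R (S *v w)" unfolding Mapp eig by (simp add: algebra_simps)
  have MiSw: "Mi *v (S *v w) = (1/(1+\<delta>)) *\<^sub>R w"
  proof -
    have "w = Mi *v (M *v w)" unfolding Mi_def using mi_v2[OF Minv] by simp
    also have "\<dots> = (1+\<delta>) *\<^sub>R (Mi *v (S *v w))" unfolding Mw by (simp add: mv_scale)
    finally have "w = (1+\<delta>) *\<^sub>R (Mi *v (S *v w))" .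
    then have "(1/(1+\<delta>)) *\<^sub>R w = (1/(1+\<delta>)) *\<^sub>R ((1+\<delta>) *\<^sub>R (Mi *v (S *v w)))" by simp
    then show ?thesis using d0 by simp
  qed
  have linK: "linear ((*v) K)" by simp
  have linH: "linear ((*v) H)" by simp
  have Jpos: "real CARD('j) > 0" by simp
  have sv': "(\<Sum>j\<in>UNIV. v' j) = (\<Sum>j\<in>UNIV. v j) + K *v (real CARD('j) *\<^sub>R y - H *v (\<Sum>j\<in>UNIV. v j))"
    unfolding v'_def by (simp add: sum.distrib linear_sum[OF linK, symmetric] linear_sum[OF linH, symmetric] sum_subtractf scaleR_conv_of_real)
  have mean': "ens_mean v' = ens_mean v + K *v (y - H *v ens_mean v)"
    unfolding ens_mean_def sv' using Jpos
    by (simp add: mv_scale scaleR_add_right scaleR_diff_right matrix_vector_mult_diff_distrib)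
  have e': "v' j - ens_mean v' = e j - K *v (H *v e j)" for j
    unfolding mean' e_def unfolding v'_def by (simp add: matrix_vector_mult_diff_distrib algebra_simps)
  have HK: "H *v (K *v z) = C *v (Mi *v z)" for z
    unfolding K_def C_def Mi_def M_def by (simp only: matrix_vector_mul_assoc matrix_mul_assoc)
  have u': "H *v (v' j - ens_mean v') = u j - C *v (Mi *v u j)" for j
    unfolding e' u_def by (simp add: matrix_vector_mult_diff_distrib HK)
  have MiS: "(Mi *v z) \<bullet> (S *v w) = (z \<bullet> w) / (1+\<delta>)" for z
  proof -
    have "(Mi *v z) \<bullet> (S *v w) = (Mi *v z) \<bullet> (M *v w) / (1+\<delta>)" unfolding Mw using d0 by simp
    also have "\<dots> = (z \<bullet> w) / (1+\<delta>)" unfolding Msym Mi_def mi_v1[OF Minv] ..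
    finally show ?thesis .
  qed
  have u'w: "(u j - C *v (Mi *v u j)) \<bullet> w = (u j \<bullet> w) / (1+\<delta>)" for j
  proof -
    have "(u j - C *v (Mi *v u j)) \<bullet> w = u j \<bullet> w - (Mi *v u j) \<bullet> (C *v w)"
      by (simp add: inner_diff_left Csym)
    also have "\<dots> = u j \<bullet> w - \<delta> * ((u j \<bullet> w) / (1+\<delta>))" unfolding eig by (simp add: MiS)
    also have "\<dots> = (u j \<bullet> w) / (1+\<delta>)" using d0 by (simp add: field_simps)
    finally show ?thesis .
  qed
  have linCM: "linear (\<lambda>z. C *v (Mi *v z))" by (simp add: matrix_vector_mul_assoc)
  have "(H ** emp_cov v' ** transpose H) *v w = c *\<^sub>R (\<Sum>j\<in>UNIV. ((u j \<bullet> w) / (1+\<delta>)) *\<^sub>R (u j - C *v (Mi *v u j)))"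
    unfolding C_apply c_def u' u'w ..
  also have "\<dots> = (1/(1+\<delta>)) *\<^sub>R (c *\<^sub>R (\<Sum>j\<in>UNIV. (u j \<bullet> w) *\<^sub>R u j) - C *v (Mi *v (c *\<^sub>R (\<Sum>j\<in>UNIV. (u j \<bullet> w) *\<^sub>R u j))))"
    by (simp add: linear_scale[OF linCM] linear_sum[OF linCM] scaleR_diff_right sum_subtractf scaleR_sum_right divide_inverse mult_ac)
  also have "\<dots> = (1/(1+\<delta>)) *\<^sub>R (C *v w - C *v (Mi *v (C *v w)))"
    unfolding Capp[symmetric] ..
  also have "\<dots> = (1/(1+\<delta>)) *\<^sub>R (\<delta> *\<^sub>R (S *v w) - (\<delta> / (1+\<delta>)) *\<^sub>R (\<delta> *\<^sub>R (S *v w)))"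
    unfolding eig by (simp add: mv_scale MiSw eig)
  also have "\<dots> = (\<delta>/(1+\<delta>)^2) *\<^sub>R (S *v w)"
  proof -
    have e: "(1/(1+\<delta>)) * (\<delta> - \<delta>/(1+\<delta>)*\<delta>) = \<delta>/(1+\<delta>)^2"
      using d0 by (simp add: field_simps power2_eq_square)
    have "(1/(1+\<delta>)) *\<^sub>R (\<delta> *\<^sub>R (S *v w) - (\<delta> / (1+\<delta>)) *\<^sub>R (\<delta> *\<^sub>R (S *v w))) = ((1/(1+\<delta>)) * (\<delta> - \<delta>/(1+\<delta>)*\<delta>)) *\<^sub>R (S *v w)"
      by (simp only: scaleR_scaleR scaleR_diff_left scaleR_diff_right mult.assoc right_diff_distrib)
    then show ?thesis unfolding e .
  qed
  finally show ?thesis .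
qed

lemma quad_zero:
  fixes a b :: real
  assumes b: "b \<ge> 0" and q: "\<And>t. 0 \<le> 2*t*a + t^2*b"
  shows "a = 0"
proof -
  define s where "s = 1/(b+1)"
  have s: "s > 0" "s*b < 1" using b by (auto simp: s_def field_simps)
  have "0 \<le> 2*(-a * s)*a + (-a * s)^2*b" by (rule q)
  also have "\<dots> = a^2 * (s*(s*b - 2))" by (simp add: power2_eq_square algebra_simps)
  finally have "0 \<le> a^2 * (s*(s*b - 2))" .
  moreover have "s*(s*b - 2) < 0" using s by (simp add: mult_pos_neg)
  ultimately show ?thesis using s by (auto simp: zero_le_mult_iff)
qed

lemma eig_exists:
  fixes C S :: "real^'n^'n"
  assumes S: "spd S" and Csym: "\<And>x z. x \<bullet> (C *v z) = (C *v x) \<bullet> z"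
    and V: "subspace V" and inv: "\<forall>x\<in>V. matrix_inv S *v (C *v x) \<in> V"
    and x0: "x0 \<in> V" "x0 \<noteq> 0"
  shows "\<exists>x\<in>V. x \<noteq> 0 \<and> (\<exists>\<delta>. C *v x = \<delta> *\<^sub>R (S *v x))"
proof -
  have Ssym: "x \<bullet> (S *v z) = (S *v x) \<bullet> z" for x z using sym_inner spd_sym[OF S] by blast
  have Sinv: "invertible S" by (rule pd_invertible) (use spd_pos[OF S] in blast)
  define K where "K = V \<inter> sphere 0 1"
  define f where "f z = (z \<bullet> (C *v z)) / (z \<bullet> (S *v z))" for z
  have cK: "compact K" unfolding K_def by (intro closed_Int_compact closed_subspace V compact_sphere)
  have "(1/norm x0) *\<^sub>R x0 \<in> K" unfolding K_def using x0 subspace_scale[OF V x0(1)] by auto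
  then have neK: "K \<noteq> {}" by blast
  have cont: "continuous_on K f" unfolding f_def
    by (intro continuous_intros) (auto simp: K_def dest!: spd_zero[OF S])
  obtain x where xK: "x \<in> K" and xmax: "\<And>z. z \<in> K \<Longrightarrow> f z \<le> f x"
    using continuous_attains_sup[OF cK neK cont] by blast
  define l where "l = f x"
  have xV: "x \<in> V" and xn: "x \<noteq> 0" using xK unfolding K_def by auto
  have fscale: "f (c *\<^sub>R z) = f z" if "c \<noteq> 0" for c z
    using that unfolding f_def by (simp add: mv_scale)
  have q: "z \<bullet> (C *v z) \<le> l * (z \<bullet> (S *v z))" if "z \<in> V" for z
  proof (cases "z = 0")
    case True then show ?thesis by simp
  next
    case False
    have "(1/norm z) *\<^sub>R z \<in> K" unfolding K_def using False subspace_scale[OF V that] by auto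
    then have "f z \<le> l" unfolding l_def using xmax fscale[of "1/norm z" z] False by force
    moreover have "z \<bullet> (S *v z) > 0" using spd_pos[OF S False] .
    ultimately show ?thesis unfolding f_def by (simp add: divide_le_eq mult.commute)
  qed
  have qx: "x \<bullet> (C *v x) = l * (x \<bullet> (S *v x))"
    unfolding l_def f_def using spd_pos[OF S xn] by simp
  define Bf where "Bf z = l *\<^sub>R (S *v z) - C *v z" for z
  have Bsym: "a \<bullet> Bf z = z \<bullet> Bf a" for a z
    unfolding Bf_def by (simp add: inner_diff_right Ssym[of a z] Csym[of a z] inner_commute[of "S *v a" z] inner_commute[of "C *v a" z])
  have Blin: "Bf (a + t *\<^sub>R z) = Bf a + t *\<^sub>R Bf z" for a z t
    unfolding Bf_def by (simp add: mv_scale matrix_vector_right_distrib algebra_simps)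
  have Bpos: "z \<bullet> Bf z \<ge> 0" if "z \<in> V" for z
    using q[OF that] unfolding Bf_def by (simp add: inner_diff_right)
  have Bx: "x \<bullet> Bf x = 0" using qx unfolding Bf_def by (simp add: inner_diff_right)
  have orth: "z \<bullet> Bf x = 0" if zV: "z \<in> V" for z
  proof (rule quad_zero[OF Bpos[OF zV]])
    fix t
    have "x + t *\<^sub>R z \<in> V" using zV xV V by (simp add: subspace_add subspace_scale)
    then have "0 \<le> (x + t *\<^sub>R z) \<bullet> Bf (x + t *\<^sub>R z)" by (rule Bpos)
    also have "\<dots> = x \<bullet> Bf x + t * (x \<bullet> Bf z) + t * (z \<bullet> Bf x) + t^2 * (z \<bullet> Bf z)"
      unfolding Blin by (simp add: inner_add inner_scaleR_left inner_scaleR_right power2_eq_square algebra_simps)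
    also have "\<dots> = 2*t*(z \<bullet> Bf x) + t^2 * (z \<bullet> Bf z)"
      unfolding Bx Bsym[of x z] by simp
    finally show "0 \<le> 2*t*(z \<bullet> Bf x) + t^2 * (z \<bullet> Bf z)" .
  qed
  define z where "z = matrix_inv S *v Bf x"
  have zeq: "z = l *\<^sub>R x - matrix_inv S *v (C *v x)"
    unfolding z_def Bf_def by (simp add: matrix_vector_mult_diff_distrib mv_scale mi_v2[OF Sinv])
  have zV: "z \<in> V" unfolding zeq
    using xV V inv by (simp add: subspace_diff subspace_scale)
  have Sz: "S *v z = Bf x" unfolding z_def using mi_v1[OF Sinv] .
  have "z \<bullet> (S *v z) = 0" unfolding Sz using orth[OF zV] .
  then have "z = 0" by (rule spd_zero[OF S])
  then have "Bf x = 0" using Sz by simp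
  then have "C *v x = l *\<^sub>R (S *v x)" unfolding Bf_def by simp
  then show ?thesis using xV xn by blast
qed

lemma eig_basis:
  fixes C S :: "real^'n^'n"
  assumes S: "spd S" and Csym: "\<And>x z. x \<bullet> (C *v z) = (C *v x) \<bullet> z"
  shows "subspace V \<Longrightarrow> (\<forall>x\<in>V. matrix_inv S *v (C *v x) \<in> V) \<Longrightarrow>
    \<exists>B. finite B \<and> B \<subseteq> V \<and> span B = V \<and> (\<forall>x\<in>B. x \<noteq> 0 \<and> (\<exists>\<delta>. C *v x = \<delta> *\<^sub>R (S *v x)))
      \<and> (\<forall>x\<in>B. \<forall>z\<in>B. x \<noteq> z \<longrightarrow> x \<bullet> (S *v z) = 0)"
proof (induction "dim V" arbitrary: V rule: less_induct)
  case less
  have Ssym: "x \<bullet> (S *v z) = (S *v x) \<bullet> z" for x z using sym_inner spd_sym[OF S] by blast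
  have Sinv: "invertible S" by (rule pd_invertible) (use spd_pos[OF S] in blast)
  show ?case
  proof (cases "\<exists>x0\<in>V. x0 \<noteq> 0")
    case False
    then have "V = {0}" using subspace_0[OF less.prems(1)] by auto
    then show ?thesis by (intro exI[of _ "{}"]) auto
  next
    case True
    then obtain x0 where "x0 \<in> V" "x0 \<noteq> 0" by blast
    from eig_exists[OF S Csym less.prems this] obtain x \<delta> where
      x: "x \<in> V" "x \<noteq> 0" "C *v x = \<delta> *\<^sub>R (S *v x)" by blast
    have xSx: "(S *v x) \<bullet> x > 0" using spd_pos[OF S x(2)] by (simp add: inner_commute)
    define V' where "V' = V \<inter> {z. (S *v x) \<bullet> z = 0}"
    have sV': "subspace V'" unfolding V'_def by (intro subspace_inter less.prems(1) subspace_hyperplane)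
    have invV': "\<forall>z\<in>V'. matrix_inv S *v (C *v z) \<in> V'"
    proof
      fix z assume z: "z \<in> V'"
      then have "matrix_inv S *v (C *v z) \<in> V" using less.prems(2) unfolding V'_def by blast
      moreover have "(S *v x) \<bullet> (matrix_inv S *v (C *v z)) = 0"
      proof -
        have "(S *v x) \<bullet> (matrix_inv S *v (C *v z)) = x \<bullet> (C *v z)"
          using Ssym[of x "matrix_inv S *v (C *v z)"] mi_v1[OF Sinv] by simp
        also have "\<dots> = \<delta> * ((S *v x) \<bullet> z)" using Csym x(3) by simp
        also have "\<dots> = 0" using z unfolding V'_def by simp
        finally show ?thesis .
      qed
      ultimately show "matrix_inv S *v (C *v z) \<in> V'" unfolding V'_def by blast
    qed
    have "x \<notin> V'" using xSx unfolding V'_def by simp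
    moreover have "V' \<subseteq> V" unfolding V'_def by blast
    ultimately have ps: "V' \<subset> V" using x(1) by blast
    have sp1: "span V' = V'" using sV' by (rule span_eq_iff[THEN iffD2])
    have sp2: "span V = V" using less.prems(1) by (rule span_eq_iff[THEN iffD2])
    have "dim V' < dim V" using dim_psubset[of V' V] ps unfolding sp1 sp2 by blast
    from less.hyps[OF this sV' invV'] obtain B' where B':
      "finite B'" "B' \<subseteq> V'" "span B' = V'" "\<forall>x\<in>B'. x \<noteq> 0 \<and> (\<exists>\<delta>. C *v x = \<delta> *\<^sub>R (S *v x))"
      "\<forall>x\<in>B'. \<forall>z\<in>B'. x \<noteq> z \<longrightarrow> x \<bullet> (S *v z) = 0" by blast
    have B'V: "B' \<subseteq> V" using B'(2) unfolding V'_def by blast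
    have spanB: "span (insert x B') = V"
    proof
      show "span (insert x B') \<subseteq> V" using span_minimal[of "insert x B'" V] B'V x(1) less.prems(1) by blast
    next
      show "V \<subseteq> span (insert x B')"
      proof
        fix z assume zV: "z \<in> V"
        define a where "a = ((S *v x) \<bullet> z) / ((S *v x) \<bullet> x)"
        have "z - a *\<^sub>R x \<in> V'" unfolding V'_def using zV x(1) less.prems(1) xSx
          by (simp add: subspace_diff subspace_scale a_def inner_diff_right)
        then have "z - a *\<^sub>R x \<in> span (insert x B')" using B'(3) span_mono[of B' "insert x B'"] by blast
        moreover have "a *\<^sub>R x \<in> span (insert x B')" by (simp add: span_base span_scale)
        ultimately have "(z - a *\<^sub>R x) + a *\<^sub>R x \<in> span (insert x B')" by (rule span_add)
        then show "z \<in> span (insert x B')" by simp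
      qed
    qed
    have orth: "\<forall>p\<in>insert x B'. \<forall>q\<in>insert x B'. p \<noteq> q \<longrightarrow> p \<bullet> (S *v q) = 0"
    proof (intro ballI impI)
      fix p q assume p: "p \<in> insert x B'" and q: "q \<in> insert x B'" and pq: "p \<noteq> q"
      have xo: "x \<bullet> (S *v b) = 0" "b \<bullet> (S *v x) = 0" if "b \<in> B'" for b
      proof -
        have "(S *v x) \<bullet> b = 0" using that B'(2) unfolding V'_def by blast
        then show "x \<bullet> (S *v b) = 0" "b \<bullet> (S *v x) = 0"
          using Ssym[of x b] inner_commute[of b "S *v x"] by simp_all
      qed
      show "p \<bullet> (S *v q) = 0"
      proof (cases "p = x")
        case True
        then show ?thesis using q pq xo by auto
      next
        case False
        then have pB: "p \<in> B'" using p by auto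
        show ?thesis
        proof (cases "q = x")
          case True then show ?thesis using pB xo by auto
        next
          case False then have "q \<in> B'" using q by auto
          then show ?thesis using pB pq B'(5) by blast
        qed
      qed
    qed
    have "finite (insert x B')" "insert x B' \<subseteq> V" using B'(1) B'V x(1) by auto
    moreover have "\<forall>p\<in>insert x B'. p \<noteq> 0 \<and> (\<exists>\<delta>. C *v p = \<delta> *\<^sub>R (S *v p))"
      using B'(4) x by blast
    ultimately show ?thesis using spanB orth by blast
  qed
qed

lemma orth_indep:
  fixes S :: "real^'n^'n"
  assumes S: "spd S" and nz: "\<forall>x\<in>B. x \<noteq> 0" and orth: "\<forall>x\<in>B. \<forall>z\<in>B. x \<noteq> z \<longrightarrow> x \<bullet> (S *v z) = 0"
  shows "independent B"
proof
  assume "dependent B"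
  then obtain T u v where T: "finite T" "T \<subseteq> B" "v \<in> T" "u v \<noteq> 0" "(\<Sum>t\<in>T. u t *\<^sub>R t) = 0"
    unfolding dependent_explicit by blast
  have lin: "linear ((*v) S)" by simp
  have "0 = v \<bullet> (S *v (\<Sum>t\<in>T. u t *\<^sub>R t))" using T(5) by simp
  also have "\<dots> = (\<Sum>t\<in>T. u t * (v \<bullet> (S *v t)))"
    by (simp add: linear_sum[OF lin] mv_scale inner_sum_right)
  also have "\<dots> = (\<Sum>t\<in>T. if t = v then u v * (v \<bullet> (S *v v)) else 0)"
  proof (rule sum.cong)
    have "v \<bullet> (S *v t) = 0" if "t \<in> T" "t \<noteq> v" for t
    proof -
      have "t \<in> B" "v \<in> B" using T(2,3) that by auto
      then show ?thesis using orth that(2) by auto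
    qed
    then show "\<And>t. t \<in> T \<Longrightarrow> u t * (v \<bullet> (S *v t)) = (if t = v then u v * (v \<bullet> (S *v v)) else 0)" by simp
  qed simp
  also have "\<dots> = u v * (v \<bullet> (S *v v))" using T by simp
  finally have "u v * (v \<bullet> (S *v v)) = 0" by simp
  moreover have "v \<bullet> (S *v v) > 0" using spd_pos[OF S] nz T by blast
  ultimately show False using T(4) by simp
qed

definition fd :: "real \<Rightarrow> real" where "fd x = x / (1+x)^2"

lemma fd_nonneg: "x \<ge> 0 \<Longrightarrow> fd x \<ge> 0" unfolding fd_def by simp
lemma fd_pos: "x > 0 \<Longrightarrow> fd x > 0" unfolding fd_def by simp
lemma fd_0: "fd 0 = 0" unfolding fd_def by simp
lemma fd_le1: "x \<ge> 0 \<Longrightarrow> fd x \<le> 1"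
proof -
  assume x: "x \<ge> 0"
  have "x*x \<ge> 0" by simp
  then have "x \<le> (1+x)^2" using x by (simp add: power2_eq_square algebra_simps)
  then show ?thesis unfolding fd_def using x by (simp add: divide_le_eq)
qed

lemma fd_mono: assumes "0 \<le> x" "x \<le> y" "y \<le> 1" shows "fd x \<le> fd y"
proof -
  have h: "y*(1+x)^2 - x*(1+y)^2 = (y-x)*(1-x*y)" by (simp add: power2_eq_square algebra_simps)
  have "x*y \<le> 1" using assms mult_le_one[of x y] by simp
  then have "(y-x)*(1-x*y) \<ge> 0" using assms by simp
  then have "x*(1+y)^2 \<le> y*(1+x)^2" using h by simp
  moreover have "(1+x)^2 > 0" "(1+y)^2 > 0" using assms by auto
  ultimately show ?thesis unfolding fd_def by (simp add: divide_le_eq le_divide_eq mult.commute mult.left_commute)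
qed

lemma fdi_nonneg: "x \<ge> 0 \<Longrightarrow> (fd ^^ i) x \<ge> 0"
  by (induction i) (auto intro: fd_nonneg)
lemma fdi_pos: "x > 0 \<Longrightarrow> (fd ^^ i) x > 0"
  by (induction i) (auto intro: fd_pos)
lemma fdi_0: "(fd ^^ i) 0 = 0"
  by (induction i) (auto simp: fd_0)

lemma fdi_mono: "0 \<le> x \<Longrightarrow> x \<le> y \<Longrightarrow> y \<le> 1 \<Longrightarrow> (fd ^^ i) x \<le> (fd ^^ i) y \<and> (fd ^^ i) y \<le> 1"
proof (induction i)
  case 0 then show ?case by simp
next
  case (Suc i)
  then have "(fd ^^ i) x \<le> (fd ^^ i) y" "(fd ^^ i) y \<le> 1" by auto
  moreover have "(fd ^^ i) x \<ge> 0" using Suc.prems fdi_nonneg by blast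
  ultimately show ?case using fd_mono fd_le1 by (auto intro: order.trans)
qed

lemma fdi_order:
  assumes "0 \<le> x" "0 \<le> y" "fd x \<le> fd y" "i \<ge> 1"
  shows "(fd ^^ i) x \<le> (fd ^^ i) y"
proof -
  obtain m where i: "i = Suc m" using assms(4) by (cases i) auto
  have "(fd ^^ m) (fd x) \<le> (fd ^^ m) (fd y)"
    using fdi_mono[of "fd x" "fd y" m] assms fd_nonneg fd_le1 by blast
  then show ?thesis unfolding i funpow_Suc_right by simp
qed

lemma eig_nonneg:
  fixes H :: "real^'d^'n" and S :: "real^'n^'n" and v :: "'j::finite \<Rightarrow> real^'d"
  assumes S: "spd S" and J: "CARD('j) \<ge> 2" and w0: "w \<noteq> 0"
    and eig: "(H ** emp_cov v ** transpose H) *v w = \<delta> *\<^sub>R (S *v w)"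
  shows "\<delta> \<ge> 0"
proof -
  have "w \<bullet> ((H ** emp_cov v ** transpose H) *v w) \<ge> 0" using C_psd J by blast
  moreover have "w \<bullet> (S *v w) > 0" using spd_pos[OF S w0] .
  moreover have "w \<bullet> ((H ** emp_cov v ** transpose H) *v w) = \<delta> * (w \<bullet> (S *v w))" using eig by simp
  ultimately show ?thesis by (simp add: zero_le_mult_iff)
qed

lemma dyn:
  fixes H :: "real^'d^'n" and S :: "real^'n^'n" and y :: "real^'n" and v0 :: "'j::finite \<Rightarrow> real^'d"
  assumes S: "spd S" and J: "CARD('j) \<ge> 2" and w0: "w \<noteq> 0"
    and eig0: "(H ** eki_cov H S y v0 0 ** transpose H) *v w = \<delta>0 *\<^sub>R (S *v w)"
  shows "(H ** eki_cov H S y v0 i ** transpose H) *v w = ((fd ^^ i) \<delta>0) *\<^sub>R (S *v w)"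
proof (induction i)
  case 0 then show ?case using eig0 by simp
next
  case (Suc i)
  show ?case
    unfolding eki_cov_def eki.simps funpow.simps o_apply fd_def[of "(fd ^^ i) \<delta>0"]
    by (rule step[OF S J _ w0]) (use Suc.IH in \<open>simp add: eki_cov_def\<close>)
qed

lemma down_closed:
  fixes P :: "nat set"
  assumes "finite P" "\<And>k l. k \<le> l \<Longrightarrow> l \<in> P \<Longrightarrow> k \<in> P"
  shows "P = {..<card P}"
proof (cases "P = {}")
  case True then show ?thesis by simp
next
  case False
  define m where "m = Max P"
  have "m \<in> P" using Max_in[OF assms(1) False] m_def by simp
  then have "P = {..m}" using assms Max_ge[OF assms(1)] m_def by auto
  then show ?thesis by (simp add: lessThan_Suc_atMost[symmetric])
qed

theorem proposition3p2:
  fixes H :: "real^'d^'n" and S :: "real^'n^'n" and y :: "real^'n"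
    and v0 :: "'j::finite \<Rightarrow> real^'d"
  assumes "spd S"
    and "CARD('j) \<ge> 2"
  defines "\<Gamma> \<equiv> eki_cov H S y v0"
    and "n \<equiv> CARD('n)"
    and "h \<equiv> rank H"
    and "RanSH \<equiv> range (\<lambda>x. matrix_inv S *v (H *v x))"
    and "KerHT \<equiv> {w. transpose H *v w = 0}"
  shows
    "(\<forall>w \<delta>0. w \<noteq> 0 \<longrightarrow> (H ** \<Gamma> 0 ** transpose H) *v w = \<delta>0 *\<^sub>R (S *v w) \<longrightarrow>
        (\<exists>\<delta>::nat \<Rightarrow> real. \<delta> 0 = \<delta>0 \<and>
           (\<forall>i. (H ** \<Gamma> i ** transpose H) *v w = \<delta> i *\<^sub>R (S *v w)) \<and>
           (\<delta>0 = 0 \<longrightarrow> (\<forall>i\<ge>1. \<delta> i = 0)) \<and>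
           (\<delta>0 > 0 \<longrightarrow> (\<forall>i\<ge>1. \<delta> i > 0))))
   \<and>
    (\<exists>(w :: nat \<Rightarrow> real^'n) (\<delta> :: nat \<Rightarrow> nat \<Rightarrow> real) r.
        inj_on w {..<n} \<and> independent (w ` {..<n}) \<and> span (w ` {..<n}) = UNIV
      \<and> (\<forall>k<n. \<forall>l<n. k \<noteq> l \<longrightarrow> w k \<bullet> (S *v w l) = 0)
      \<and> (\<forall>k<n. \<forall>i. (H ** \<Gamma> i ** transpose H) *v w k = \<delta> k i *\<^sub>R (S *v w k))
      \<and> r = card {k. k < n \<and> \<delta> k 0 > 0}
      \<and> r \<le> h
      \<and> (\<forall>k<r. w k \<in> RanSH \<and> (\<forall>i. \<delta> k i > 0))
      \<and> (\<forall>i\<ge>1. \<forall>k l. k \<le> l \<and> l < r \<longrightarrow> \<delta> l i \<le> \<delta> k i)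
      \<and> (\<forall>k. r \<le> k \<and> k < h \<longrightarrow> w k \<in> RanSH \<and> (\<forall>i. \<delta> k i = 0))
      \<and> (\<forall>k. h \<le> k \<and> k < n \<longrightarrow> w k \<in> KerHT \<and> (\<forall>i. \<delta> k i = 0))
      \<and> span (w ` {..<h}) = RanSH
      \<and> span (w ` {h..<n}) = KerHT)"
proof -
  note S = assms(1) and J = assms(2)
  define C0 where "C0 = H ** \<Gamma> 0 ** transpose H"
  define Si where "Si = matrix_inv S"
  have Ssym: "x \<bullet> (S *v z) = (S *v x) \<bullet> z" for x z using sym_inner spd_sym[OF S] by blast
  have Sinv: "invertible S" by (rule pd_invertible) (use spd_pos[OF S] in blast)
  have C0sym: "x \<bullet> (C0 *v z) = (C0 *v x) \<bullet> z" for x z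
    unfolding C0_def \<Gamma>_def eki_cov_def by (rule C_sym)
  have C0fact: "C0 *v x = H *v ((\<Gamma> 0 ** transpose H) *v x)" for x
    unfolding C0_def by (simp only: matrix_vector_mul_assoc matrix_mul_assoc)
  have C0nn: "\<delta> \<ge> 0" if "x \<noteq> 0" "C0 *v x = \<delta> *\<^sub>R (S *v x)" for x \<delta>
    using eig_nonneg[OF S J that(1)] that(2) unfolding C0_def \<Gamma>_def eki_cov_def by simp
  have dyn': "(H ** \<Gamma> i ** transpose H) *v x = ((fd ^^ i) \<delta>) *\<^sub>R (S *v x)"
    if "x \<noteq> 0" "C0 *v x = \<delta> *\<^sub>R (S *v x)" for x \<delta> i
    using dyn[OF S J that(1)] that(2) unfolding C0_def \<Gamma>_def by blast
  have part1: "\<forall>w \<delta>0. w \<noteq> 0 \<longrightarrow> (H ** \<Gamma> 0 ** transpose H) *v w = \<delta>0 *\<^sub>R (S *v w) \<longrightarrow>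
        (\<exists>\<delta>::nat \<Rightarrow> real. \<delta> 0 = \<delta>0 \<and>
           (\<forall>i. (H ** \<Gamma> i ** transpose H) *v w = \<delta> i *\<^sub>R (S *v w)) \<and>
           (\<delta>0 = 0 \<longrightarrow> (\<forall>i\<ge>1. \<delta> i = 0)) \<and>
           (\<delta>0 > 0 \<longrightarrow> (\<forall>i\<ge>1. \<delta> i > 0)))"
  proof (intro allI impI)
    fix w \<delta>0 assume w0: "w \<noteq> 0" and e: "(H ** \<Gamma> 0 ** transpose H) *v w = \<delta>0 *\<^sub>R (S *v w)"
    show "\<exists>\<delta>::nat \<Rightarrow> real. \<delta> 0 = \<delta>0 \<and>
           (\<forall>i. (H ** \<Gamma> i ** transpose H) *v w = \<delta> i *\<^sub>R (S *v w)) \<and>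
           (\<delta>0 = 0 \<longrightarrow> (\<forall>i\<ge>1. \<delta> i = 0)) \<and>
           (\<delta>0 > 0 \<longrightarrow> (\<forall>i\<ge>1. \<delta> i > 0))"
      by (rule exI[of _ "\<lambda>i. (fd ^^ i) \<delta>0"])
         (use dyn'[OF w0] e fdi_0 fdi_pos in \<open>auto simp: C0_def\<close>)
  qed
  have RanSH_eq: "RanSH = range ((*v) (Si ** H))"
    unfolding RanSH_def Si_def by (simp add: matrix_vector_mul_assoc)
  have subR: "subspace RanSH" unfolding RanSH_eq subspace_def
    by (auto simp: matrix_vector_right_distrib[symmetric] mv_scale[symmetric] intro: range_eqI[of _ _ 0])
  have subK: "subspace KerHT" unfolding KerHT_def subspace_def
    by (simp del: transpose_matrix_vector add: matrix_vector_right_distrib mv_scale)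
  have invR: "\<forall>x\<in>RanSH. Si *v (C0 *v x) \<in> RanSH"
    unfolding RanSH_def C0fact Si_def by blast
  have C0K: "C0 *v x = 0" if "x \<in> KerHT" for x
    using that unfolding C0fact KerHT_def
    by (simp del: transpose_matrix_vector add: matrix_vector_mul_assoc[symmetric])
  have invK: "\<forall>x\<in>KerHT. Si *v (C0 *v x) \<in> KerHT"
    using C0K subspace_0[OF subK] by simp
  obtain B1 where B1: "finite B1" "B1 \<subseteq> RanSH" "span B1 = RanSH"
    "\<forall>x\<in>B1. x \<noteq> 0 \<and> (\<exists>\<delta>. C0 *v x = \<delta> *\<^sub>R (S *v x))"
    "\<forall>x\<in>B1. \<forall>z\<in>B1. x \<noteq> z \<longrightarrow> x \<bullet> (S *v z) = 0"
    using eig_basis[OF S C0sym subR invR[unfolded Si_def]] by blast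
  obtain B2 where B2: "finite B2" "B2 \<subseteq> KerHT" "span B2 = KerHT"
    "\<forall>x\<in>B2. x \<noteq> 0 \<and> (\<exists>\<delta>. C0 *v x = \<delta> *\<^sub>R (S *v x))"
    "\<forall>x\<in>B2. \<forall>z\<in>B2. x \<noteq> z \<longrightarrow> x \<bullet> (S *v z) = 0"
    using eig_basis[OF S C0sym subK invK[unfolded Si_def]] by blast
  have ind1: "independent B1" using orth_indep[OF S] B1 by blast
  have ind2: "independent B2" using orth_indep[OF S] B2 by blast
  have rankSiH: "rank (Si ** H) = h"
  proof -
    have "S ** Si = mat 1" using mi[OF Sinv] Si_def by simp
    then have "rank H = rank (S ** (Si ** H))" by (simp add: matrix_mul_assoc)
    then have "rank H \<le> rank (Si ** H)" using rank_mul_le_right[of S "Si ** H"] by simp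
    then show ?thesis using rank_mul_le_right[of Si H] h_def by simp
  qed
  have cardB1: "card B1 = h"
    using dim_span_eq_card_independent[OF ind1] B1(3) rankSiH
    unfolding RanSH_eq rank_dim_range by simp
  have KerHT_orth: "KerHT = {z \<in> UNIV. \<forall>x\<in>range ((*v) H). orthogonal x z}"
  proof -
    have "transpose H *v z = 0 \<longleftrightarrow> (\<forall>x. (H *v x) \<bullet> z = 0)" for z
    proof
      assume "transpose H *v z = 0"
      then show "\<forall>x. (H *v x) \<bullet> z = 0" using tr_inner[of _ H z] by simp
    next
      assume a: "\<forall>x. (H *v x) \<bullet> z = 0"
      have "(transpose H *v z) \<bullet> (transpose H *v z) = 0"
        using a tr_inner[of "transpose H *v z" H z] by simp
      then show "transpose H *v z = 0" by simp
    qed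
    then show ?thesis unfolding KerHT_def orthogonal_def by auto
  qed
  have dsum: "dim KerHT + dim (range ((*v) H)) = dim (UNIV :: (real^'n) set)"
    unfolding KerHT_orth
    by (rule dim_subspace_orthogonal_to_vectors) (auto simp: subspace_def matrix_vector_right_distrib[symmetric] mv_scale[symmetric] intro: range_eqI[of _ _ 0])
  then have dimK: "dim KerHT = n - h" and hn: "h \<le> n"
    unfolding h_def n_def rank_dim_range by simp_all
  have cardB2: "card B2 = n - h"
    using dim_span_eq_card_independent[OF ind2] B2(3) dimK by simp
  have SR: "S *v (Si *v (H *v z)) = H *v z" for z unfolding Si_def using mi_v1[OF Sinv] .
  have cross: "p \<bullet> (S *v q) = 0 \<and> q \<bullet> (S *v p) = 0" if pR: "p \<in> RanSH" and qK: "q \<in> KerHT" for p q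
  proof -
    obtain z where p: "p = Si *v (H *v z)" using pR unfolding RanSH_def Si_def by blast
    have q: "transpose H *v q = 0" using qK unfolding KerHT_def by simp
    have "(H *v z) \<bullet> q = 0" using tr_inner[of z H q] q by simp
    then show ?thesis unfolding p Ssym[of _ q] SR by (simp add: inner_commute)
  qed
  have RK0: "x = 0" if "x \<in> RanSH" "x \<in> KerHT" for x
    using cross[OF that] spd_zero[OF S] by blast
  define B where "B = B1 \<union> B2"
  have disj: "B1 \<inter> B2 = {}" using RK0 B1(2,4) B2(2,4) by blast
  have finB: "finite B" unfolding B_def using B1 B2 by simp
  have cardB: "card B = n" unfolding B_def using card_Un_disjoint[OF B1(1) B2(1) disj] cardB1 cardB2 hn by simp
  have nzB: "\<forall>x\<in>B. x \<noteq> 0" unfolding B_def using B1(4) B2(4) by blast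
  have orthB: "\<forall>x\<in>B. \<forall>z\<in>B. x \<noteq> z \<longrightarrow> x \<bullet> (S *v z) = 0"
    unfolding B_def using B1(2,5) B2(2,5) cross by blast
  have indB: "independent B" using orth_indep[OF S nzB orthB] .
  have spanB: "span B = UNIV"
    using card_ge_dim_independent[of B UNIV] indB cardB unfolding n_def by auto
  define ev where "ev x = (x \<bullet> (C0 *v x)) / (x \<bullet> (S *v x))" for x
  have evB: "C0 *v x = ev x *\<^sub>R (S *v x)" if xB: "x \<in> B" for x
  proof -
    obtain \<delta> where d: "C0 *v x = \<delta> *\<^sub>R (S *v x)" using xB B1(4) B2(4) unfolding B_def by blast
    have "x \<bullet> (S *v x) > 0" using spd_pos[OF S] nzB xB by blast
    then have "ev x = \<delta>" unfolding ev_def d by simp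
    then show ?thesis using d by simp
  qed
  have ev_nn: "ev x \<ge> 0" if "x \<in> B" for x
  proof (rule C0nn[OF _ evB[OF that]])
    show "x \<noteq> 0" using nzB that by blast
  qed
  have ev_K: "ev x = 0" if "x \<in> B2" for x
  proof -
    have "C0 *v x = 0" using C0K B2(2) that by blast
    then show ?thesis unfolding ev_def by simp
  qed
  obtain xs where xs: "set xs = B1" "distinct xs" using finite_distinct_list[OF B1(1)] by blast
  obtain zs where zs: "set zs = B2" "distinct zs" using finite_distinct_list[OF B2(1)] by blast
  define key where "key x = - fd (ev x)" for x
  define ys where "ys = sort_key key xs"
  have ys: "set ys = B1" "distinct ys" "sorted (map key ys)" unfolding ys_def using xs by auto
  have lys: "length ys = h" using distinct_card[OF ys(2)] ys(1) cardB1 by simp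
  have lzs: "length zs = n - h" using distinct_card[OF zs(2)] zs(1) cardB2 by simp
  define w where "w k = (if k < h then ys ! k else zs ! (k - h))" for k
  define \<delta> where "\<delta> k i = (fd ^^ i) (ev (w k))" for k i
  have wB1: "w k \<in> B1" if "k < h" for k using that lys ys(1) unfolding w_def by auto
  have wB2: "w k \<in> B2" if "h \<le> k" "k < n" for k using that lzs zs(1) hn unfolding w_def by auto
  have wB: "w k \<in> B" if "k < n" for k using wB1 wB2 that unfolding B_def by (cases "k < h") auto
  have img1: "w ` {..<h} = B1"
  proof
    show "w ` {..<h} \<subseteq> B1" using wB1 by auto
    show "B1 \<subseteq> w ` {..<h}"
    proof
      fix x assume "x \<in> B1"
      then obtain i where "i < h" "x = ys ! i" using ys(1) lys by (auto simp: in_set_conv_nth)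
      then show "x \<in> w ` {..<h}" unfolding w_def by (intro image_eqI[of _ _ i]) auto
    qed
  qed
  have img2: "w ` {h..<n} = B2"
  proof
    show "w ` {h..<n} \<subseteq> B2" using wB2 by auto
    show "B2 \<subseteq> w ` {h..<n}"
    proof
      fix x assume "x \<in> B2"
      then obtain i where "i < n - h" "x = zs ! i" using zs(1) lzs by (auto simp: in_set_conv_nth)
      then show "x \<in> w ` {h..<n}" unfolding w_def by (intro image_eqI[of _ _ "i + h"]) auto
    qed
  qed
  have ivl: "{..<n} = {..<h} \<union> {h..<n}" using hn by auto
  have imgB: "w ` {..<n} = B" unfolding ivl image_Un img1 img2 B_def ..
  have injw: "inj_on w {..<n}"
    using inj_on_iff_eq_card[of "{..<n}" w] imgB cardB by simp
  have sortd: "fd (ev (w l)) \<le> fd (ev (w k))" if "k \<le> l" "l < h" for k l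
  proof -
    have "(map key ys) ! k \<le> (map key ys) ! l" using sorted_nth_mono[OF ys(3) that(1)] that lys by simp
    then show ?thesis using that lys unfolding w_def key_def by simp
  qed
  define r where "r = card {k. k < n \<and> \<delta> k 0 > 0}"
  define P where "P = {k. k < n \<and> \<delta> k 0 > 0}"
  have Ph: "P \<subseteq> {..<h}"
  proof
    fix k assume "k \<in> P"
    then have "k < n" "ev (w k) > 0" unfolding P_def \<delta>_def by auto
    then show "k \<in> {..<h}" using ev_K wB2 by (cases "k < h") force+
  qed
  have Pdown: "k \<in> P" if "k \<le> l" "l \<in> P" for k l
  proof -
    have l: "l < h" "ev (w l) > 0" using that(2) Ph unfolding P_def \<delta>_def by auto
    have "fd (ev (w k)) > 0" using sortd[OF that(1) l(1)] fd_pos[OF l(2)] by simp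
    moreover have "ev (w k) \<ge> 0" using ev_nn wB that l hn by simp
    ultimately have "ev (w k) > 0" using fd_0 by (cases "ev (w k) = 0") auto
    then show ?thesis unfolding P_def \<delta>_def using that l hn by simp
  qed
  have finP: "finite P" using Ph finite_subset by blast
  have Peq: "P = {..<r}" using down_closed[OF finP Pdown] unfolding r_def P_def by simp
  have rh: "r \<le> h" using card_mono[OF _ Ph] unfolding r_def P_def[symmetric] by simp
  show ?thesis
  proof (intro conjI part1 exI[of _ w] exI[of _ \<delta>] exI[of _ r])
    show "inj_on w {..<n}" by (rule injw)
    show "independent (w ` {..<n})" unfolding imgB by (rule indB)
    show "span (w ` {..<n}) = UNIV" unfolding imgB by (rule spanB)
    show "\<forall>k<n. \<forall>l<n. k \<noteq> l \<longrightarrow> w k \<bullet> (S *v w l) = 0"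
      using orthB wB injw unfolding inj_on_def by blast
    show "\<forall>k<n. \<forall>i. (H ** \<Gamma> i ** transpose H) *v w k = \<delta> k i *\<^sub>R (S *v w k)"
      unfolding \<delta>_def using dyn' evB wB nzB by blast
    show "r = card {k. k < n \<and> \<delta> k 0 > 0}" by (rule r_def)
    show "r \<le> h" by (rule rh)
    show "\<forall>k<r. w k \<in> RanSH \<and> (\<forall>i. \<delta> k i > 0)"
    proof (intro allI impI conjI)
      fix k i assume "k < r"
      then have "k \<in> P" using Peq by simp
      then have "k < h" "ev (w k) > 0" using Ph unfolding P_def \<delta>_def by auto
      then show "w k \<in> RanSH" "\<delta> k i > 0" using wB1 B1(2) fdi_pos unfolding \<delta>_def by auto
    qed
    show "\<forall>i\<ge>1. \<forall>k l. k \<le> l \<and> l < r \<longrightarrow> \<delta> l i \<le> \<delta> k i"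
    proof (intro allI impI)
      fix i :: nat and k l assume i: "i \<ge> 1" and kl: "k \<le> l \<and> l < r"
      then have lh: "l < h" using rh by simp
      show "\<delta> l i \<le> \<delta> k i" unfolding \<delta>_def
        by (rule fdi_order) (use ev_nn wB lh kl hn sortd i in auto)
    qed
    show "\<forall>k. r \<le> k \<and> k < h \<longrightarrow> w k \<in> RanSH \<and> (\<forall>i. \<delta> k i = 0)"
    proof (intro allI impI conjI)
      fix k i assume k: "r \<le> k \<and> k < h"
      then have "k \<notin> P" using Peq by simp
      then have "ev (w k) \<le> 0" using k hn unfolding P_def \<delta>_def by auto
      moreover have "ev (w k) \<ge> 0" using ev_nn wB k hn by simp
      ultimately have "ev (w k) = 0" by simp
      then show "w k \<in> RanSH" "\<delta> k i = 0" using wB1 B1(2) k fdi_0 unfolding \<delta>_def by auto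
    qed
    show "\<forall>k. h \<le> k \<and> k < n \<longrightarrow> w k \<in> KerHT \<and> (\<forall>i. \<delta> k i = 0)"
      using wB2 B2(2) ev_K fdi_0 unfolding \<delta>_def by auto
    show "span (w ` {..<h}) = RanSH" unfolding img1 by (rule B1(3))
    show "span (w ` {h..<n}) = KerHT" unfolding img2 by (rule B2(3))
  qed
qed

end
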